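(* In the setting described in the context: (1) If the model is DUR with constants $d,k$ and the parametrisation $(\tilde X,\Theta)$ is GTIP, then for all sufficiently small $\alpha>0$ there is $0<K<\infty$ such that $\mathbf E\{e^{\alpha|X|}\mid Y=y,\Theta=\theta\}\le e^{\alpha|\theta|}(1-\alpha d/2)+K$ for all $|\theta|>k$. (2) If the model is PUR with constants $d,k$ and the parametrisation $(X,\Theta)$ is GTIP, then for all sufficiently small $\alpha>0$ there is $0<K<\infty$ such that $\mathbf E\{e^{\alpha|y-\tilde X|}\mid Y=y,\Theta=\theta\}\le e^{\alpha|\theta|}(1-\alpha d/2)+K$ for all $|\theta|>k$.
   Context: Fix an observed value $y\in\mathbb R$. Consider the model $Y=X+Z_1$, $X=\Theta+Z_2$, where $Z_1,Z_2$ are independent real random variables, independent of $\Theta$, whose distributions are symmetric about $0$ and have continuous, bounded, everywhere positive Lebesgue densities $f_1,f_2$; $\Theta$ is given the improper flat (Lebesgue) prior on $\mathbb R$, and the posterior $\mathcal L(X,\Theta\mid Y=y)$ is proper. Write $\tilde X=X-\Theta$. A parametrisation $(U,\Theta)$, $U\in\{X,\tilde X\}$, is GTIP (geometrically tight in parameter) if there are constants $a,b>0$ not depending on $\theta$ such that $\mathbf P(|U|>x\mid Y=y,\Theta=\theta)\le ae^{-bx}$ for all $\theta\in\mathbb R$ and $x\ge0$. The model is DUR (data uniformly relevant) with constants $d,k>0$ if $|\mathbf E\{X\mid Y=y,\Theta=\theta\}|\le|\theta|-d$ for all $|\theta|>k$; it is PUR (parameter uniformly relevant) with constants $d,k>0$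 if $\operatorname{sgn}(\theta)\,\mathbf E\{X-y\mid Y=y,\Theta=\theta\}\ge d$ for all $|\theta|>k$. *)

theory Defs
  imports "HOL-Probability.Probability"
begin

definition noise_density :: "(real \<Rightarrow> real) \<Rightarrow> bool" where
  "noise_density f \<longleftrightarrow> continuous_on UNIV f \<and> (\<exists>B. \<forall>x. f x \<le> B) \<and> (\<forall>x. 0 < f x)
     \<and> (\<forall>x. f (- x) = f x) \<and> integrable lborel f \<and> (\<integral>x. f x \<partial>lborel) = 1"

text \<open>Unnormalised conditional density of X given Y = y, Theta = theta
  (flat prior on Theta): f1(y - x) f2(x - theta).\<close>
definition lik :: "(real \<Rightarrow> real) \<Rightarrow> (real \<Rightarrow> real) \<Rightarrow> real \<Rightarrow> real \<Rightarrow> real \<Rightarrow> real" where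
  "lik f1 f2 y \<theta> x = f1 (y - x) * f2 (x - \<theta>)"

definition norm_const :: "(real \<Rightarrow> real) \<Rightarrow> (real \<Rightarrow> real) \<Rightarrow> real \<Rightarrow> real \<Rightarrow> real" where
  "norm_const f1 f2 y \<theta> = (\<integral>x. lik f1 f2 y \<theta> x \<partial>lborel)"

definition cond_law :: "(real \<Rightarrow> real) \<Rightarrow> (real \<Rightarrow> real) \<Rightarrow> real \<Rightarrow> real \<Rightarrow> real measure" where
  "cond_law f1 f2 y \<theta> = density lborel (\<lambda>x. ennreal (lik f1 f2 y \<theta> x / norm_const f1 f2 y \<theta>))"

definition GTIP_X :: "(real \<Rightarrow> real) \<Rightarrow> (real \<Rightarrow> real) \<Rightarrow> real \<Rightarrow> bool" where
  "GTIP_X f1 f2 y \<longleftrightarrow> (\<exists>a>0. \<exists>b>0. \<forall>\<theta> t. t \<ge> 0 \<longrightarrow>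
      measure (cond_law f1 f2 y \<theta>) {x. \<bar>x\<bar> > t} \<le> a * exp (- b * t))"

text \<open>GTIP for the parametrisation (X~, Theta), X~ = X - Theta.\<close>
definition GTIP_Xt :: "(real \<Rightarrow> real) \<Rightarrow> (real \<Rightarrow> real) \<Rightarrow> real \<Rightarrow> bool" where
  "GTIP_Xt f1 f2 y \<longleftrightarrow> (\<exists>a>0. \<exists>b>0. \<forall>\<theta> t. t \<ge> 0 \<longrightarrow>
      measure (cond_law f1 f2 y \<theta>) {x. \<bar>x - \<theta>\<bar> > t} \<le> a * exp (- b * t))"

definition DUR :: "(real \<Rightarrow> real) \<Rightarrow> (real \<Rightarrow> real) \<Rightarrow> real \<Rightarrow> real \<Rightarrow> real \<Rightarrow> bool" where
  "DUR f1 f2 y d k \<longleftrightarrow> d > 0 \<and> k > 0 \<and> (\<forall>\<theta>. \<bar>\<theta>\<bar> > k \<longrightarrow>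
      \<bar>\<integral>x. x \<partial>cond_law f1 f2 y \<theta>\<bar> \<le> \<bar>\<theta>\<bar> - d)"

definition PUR :: "(real \<Rightarrow> real) \<Rightarrow> (real \<Rightarrow> real) \<Rightarrow> real \<Rightarrow> real \<Rightarrow> real \<Rightarrow> bool" where
  "PUR f1 f2 y d k \<longleftrightarrow> d > 0 \<and> k > 0 \<and> (\<forall>\<theta>. \<bar>\<theta>\<bar> > k \<longrightarrow>
      sgn \<theta> * (\<integral>x. (x - y) \<partial>cond_law f1 f2 y \<theta>) \<ge> d)"

end

theory Submission
  imports Defs
begin


lemma exp_quad_neg: fixes u::real assumes "u \<le> 0" shows "exp u \<le> 1 + u + u^2"
proof -
  define v where "v = -u"
  have v: "v \<ge> 0" using assms v_def by simp
  have "1 + v \<le> exp v" by simp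
  have pos: "0 < 1 - v + v^2" by (smt (verit) power2_eq_square mult_nonneg_nonneg v mult_le_cancel_left1 zero_le_power2)
  have "1 \<le> (1 - v + v^2) * (1 + v)" using v by (simp add: algebra_simps power2_eq_square power3_eq_cube)
  also have "\<dots> \<le> (1 - v + v^2) * exp v" using pos \<open>1 + v \<le> exp v\<close> by (simp add: mult_left_mono)
  finally have "1 \<le> (1 - v + v^2) * exp v" .
  hence "exp (-v) \<le> 1 - v + v^2" by (simp add: exp_minus field_simps)
  thus ?thesis by (simp add: v_def)
qed

lemma exp_quad: fixes u::real shows "exp u \<le> 1 + u + u^2 * exp \<bar>u\<bar>"
proof (cases "u \<le> 0")
  case True
  have "u^2 * 1 \<le> u^2 * exp \<bar>u\<bar>" by (rule mult_left_mono) auto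
  thus ?thesis using exp_quad_neg[OF True] by linarith
next
  case False
  show ?thesis
  proof (cases "u \<le> 1")
    case True
    have "u^2 * 1 \<le> u^2 * exp \<bar>u\<bar>" by (rule mult_left_mono) auto
    thus ?thesis using exp_bound[of u] True False by linarith
  next
    case F2: False
    have "1 \<le> u^2" using F2 by (simp add: one_le_power)
    hence "exp u \<le> u^2 * exp \<bar>u\<bar>" using False by simp
    thus ?thesis using False by linarith
  qed
qed

lemma sq_le_exp: fixes w s::real assumes "s > 0" shows "w^2 \<le> 4 / s^2 * exp (s * \<bar>w\<bar>)"
proof -
  have "s * \<bar>w\<bar> / 2 \<le> 1 + s * \<bar>w\<bar> / 2" by simp
  also have "\<dots> \<le> exp (s * \<bar>w\<bar> / 2)" by (rule exp_ge_add_one_self)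
  finally have h: "s * \<bar>w\<bar> / 2 \<le> exp (s * \<bar>w\<bar> / 2)" .
  have "(s * \<bar>w\<bar> / 2)^2 \<le> (exp (s * \<bar>w\<bar> / 2))^2"
    using h assms by (intro power_mono) auto
  also have "\<dots> = exp (s * \<bar>w\<bar>)" by (simp add: power2_eq_square flip: exp_add)
  finally have "s^2 * w^2 / 4 \<le> exp (s * \<bar>w\<bar>)" by (simp add: power_mult_distrib power_divide)
  thus ?thesis using assms by (simp add: field_simps)
qed

lemma pw: fixes s v \<theta> \<alpha> :: real assumes "\<bar>s\<bar> = 1" "\<alpha> \<ge> 0"
  shows "exp (\<alpha> * \<bar>v\<bar>) \<le> exp (\<alpha> * \<bar>\<theta>\<bar>) * exp (\<alpha> * (s * v - \<bar>\<theta>\<bar>)) + exp (\<alpha> * \<bar>s * v - \<bar>\<theta>\<bar>\<bar>)"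
proof -
  have e: "exp (\<alpha> * \<bar>\<theta>\<bar>) * exp (\<alpha> * (s * v - \<bar>\<theta>\<bar>)) = exp (\<alpha> * (s * v))"
    by (simp add: algebra_simps flip: exp_add)
  have av: "\<bar>v\<bar> = \<bar>s * v\<bar>" using assms by (simp add: abs_mult)
  show ?thesis
  proof (cases "s * v \<ge> 0")
    case True
    thus ?thesis using e av by simp
  next
    case False
    hence "\<bar>v\<bar> \<le> \<bar>s * v - \<bar>\<theta>\<bar>\<bar>" using av by linarith
    hence "exp (\<alpha> * \<bar>v\<bar>) \<le> exp (\<alpha> * \<bar>s * v - \<bar>\<theta>\<bar>\<bar>)" using assms(2) by (simp add: mult_left_mono)
    moreover have "0 \<le> exp (\<alpha> * \<bar>\<theta>\<bar>) * exp (\<alpha> * (s * v - \<bar>\<theta>\<bar>))" by simp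
    ultimately show ?thesis by linarith
  qed
qed



lemma tail_nn:
  fixes M :: "'a measure" and W :: "'a \<Rightarrow> real" and a b c :: real
  assumes P: "prob_space M" and Wm: "W \<in> borel_measurable M" and a: "a > 0" and b: "b > 0"
    and c: "0 \<le> c" "c < b"
    and tail: "\<forall>t\<ge>0. measure M {x\<in>space M. t < \<bar>W x\<bar>} \<le> a * exp (- b * t)"
  shows "(\<integral>\<^sup>+x. ennreal (exp (c * \<bar>W x\<bar>)) \<partial>M) \<le> ennreal ((a+1) * exp (b + c) / (1 - exp (c - b)))"
proof -
  interpret prob_space M by (rule P)
  define A where "A n = {x\<in>space M. real n \<le> \<bar>W x\<bar>}" for n :: nat
  have Asets: "A n \<in> sets M" for n unfolding A_def using Wm by measurable
  have mA: "measure M (A n) \<le> (a+1) * exp b * exp (- b * real n)" for n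
  proof (cases n)
    case 0
    have "measure M (A n) \<le> 1" by (rule prob_le_1)
    also have "1 \<le> (a+1) * exp b * exp (- b * real n)"
    proof -
      have "1 \<le> a + 1" using a by simp
      moreover have "1 \<le> exp b" using b by simp
      ultimately have "1 * 1 \<le> (a+1) * exp b" by (intro mult_mono) auto
      thus ?thesis using 0 by simp
    qed
    finally show ?thesis .
  next
    case (Suc m)
    have "A n \<subseteq> {x\<in>space M. real m < \<bar>W x\<bar>}" unfolding A_def using Suc by auto
    hence "measure M (A n) \<le> measure M {x\<in>space M. real m < \<bar>W x\<bar>}"
      using Wm by (intro finite_measure_mono) measurable
    also have "\<dots> \<le> a * exp (- b * real m)" using tail by simp
    also have "\<dots> = a * exp b * exp (- b * real n)" using Suc by (simp add: algebra_simps flip: exp_add)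
    also have "\<dots> \<le> (a+1) * exp b * exp (- b * real n)" by (intro mult_right_mono) auto
    finally show ?thesis .
  qed
  define r where "r = exp (c - b)"
  have r: "0 \<le> r" "r < 1" using c by (auto simp: r_def)
  define C where "C = (a+1) * exp (b + c)"
  have C: "C > 0" using a by (simp add: C_def)
  have pt: "ennreal (exp (c * \<bar>W x\<bar>)) \<le> (\<Sum>n. ennreal (exp (c * (real n + 1))) * indicator (A n) x)"
    if x: "x \<in> space M" for x
  proof -
    define n where "n = nat \<lfloor>\<bar>W x\<bar>\<rfloor>"
    have n1: "real n \<le> \<bar>W x\<bar>" unfolding n_def by linarith
    have n2: "\<bar>W x\<bar> \<le> real n + 1" unfolding n_def by linarith
    have "ennreal (exp (c * \<bar>W x\<bar>)) \<le> ennreal (exp (c * (real n + 1)))"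
      using n2 c by (intro ennreal_leI) (simp add: mult_left_mono)
    also have "\<dots> = ennreal (exp (c * (real n + 1))) * indicator (A n) x"
      using n1 x by (simp add: A_def)
    also have "\<dots> \<le> (\<Sum>m. ennreal (exp (c * (real m + 1))) * indicator (A m) x)"
    proof -
      have "(\<Sum>i\<in>{n}. ennreal (exp (c * (real i + 1))) * indicator (A i) x) \<le> (\<Sum>m. ennreal (exp (c * (real m + 1))) * indicator (A m) x)"
        by (rule sum_le_suminf[OF summableI]) auto
      thus ?thesis by (simp only: sum.insert_if finite.emptyI sum.empty empty_iff if_False add_0_right)
    qed
    finally show ?thesis .
  qed
  have "(\<integral>\<^sup>+x. ennreal (exp (c * \<bar>W x\<bar>)) \<partial>M) \<le> (\<integral>\<^sup>+x. (\<Sum>n. ennreal (exp (c * (real n + 1))) * indicator (A n) x) \<partial>M)"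
    by (intro nn_integral_mono) (use pt in auto)
  also have "\<dots> = (\<Sum>n. \<integral>\<^sup>+x. ennreal (exp (c * (real n + 1))) * indicator (A n) x \<partial>M)"
    by (intro nn_integral_suminf) (use Asets in measurable)
  also have "\<dots> = (\<Sum>n. ennreal (exp (c * (real n + 1))) * emeasure M (A n))"
    by (simp add: nn_integral_cmult_indicator Asets)
  also have "\<dots> \<le> (\<Sum>n. ennreal (C * r ^ n))"
  proof (intro suminf_le summableI)
    fix n
    have "ennreal (exp (c * (real n + 1))) * emeasure M (A n)
        = ennreal (exp (c * (real n + 1)) * measure M (A n))"
      by (simp add: emeasure_eq_measure ennreal_mult)
    also have "\<dots> \<le> ennreal (exp (c * (real n + 1)) * ((a+1) * exp b * exp (- b * real n)))"
      by (intro ennreal_leI mult_left_mono mA) auto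
    also have "exp (c * (real n + 1)) * ((a+1) * exp b * exp (- b * real n)) = C * r ^ n"
      by (simp add: C_def r_def algebra_simps flip: exp_add exp_of_nat_mult)
    finally show "ennreal (exp (c * (real n + 1))) * emeasure M (A n) \<le> ennreal (C * r ^ n)" .
  qed
  also have "\<dots> = ennreal (C * (1 / (1 - r)))"
    using C r by (intro suminf_ennreal_eq sums_mult geometric_sums) auto
  finally show ?thesis by (simp add: C_def r_def)
qed



lemma L:
  fixes a b d :: real assumes a: "a > 0" and b: "b > 0" and d: "d > 0"
  obtains \<alpha>0 K where "\<alpha>0 > 0" "K > 0"
    "\<And>\<alpha> M (W :: real \<Rightarrow> real). 0 < \<alpha> \<Longrightarrow> \<alpha> < \<alpha>0 \<Longrightarrow> prob_space M \<Longrightarrow> W \<in> borel_measurable M \<Longrightarrow>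
      (\<forall>t\<ge>0. measure M {x\<in>space M. t < \<bar>W x\<bar>} \<le> a * exp (- b * t)) \<Longrightarrow>
      0 < 1 - \<alpha> * d / 2 \<and> (\<integral>\<^sup>+x. ennreal (exp (\<alpha> * \<bar>W x\<bar>)) \<partial>M) \<le> ennreal K \<and> integrable M W \<and>
      (integral\<^sup>L M W \<le> - d \<longrightarrow> (\<integral>\<^sup>+x. ennreal (exp (\<alpha> * W x)) \<partial>M) \<le> ennreal (1 - \<alpha> * d / 2))"
proof -
  define c where "c = 2 * b / 3"
  have c: "0 \<le> c" "c < b" "c > 0" using b by (auto simp: c_def)
  define K1 where "K1 = (a+1) * exp (b + c) / (1 - exp (c - b))"
  have K1: "K1 > 0" using a c by (simp add: K1_def)
  define Cc where "Cc = 4 / (b/3)^2"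
  have Cc: "Cc > 0" using b by (simp add: Cc_def)
  define \<alpha>0 where "\<alpha>0 = min (b/3) (min (1/d) (d / (2 * Cc * K1)))"
  have \<alpha>0: "\<alpha>0 > 0" using b d Cc K1 by (simp add: \<alpha>0_def)
  show ?thesis
  proof (rule that[OF \<alpha>0 K1])
    fix \<alpha> M and W :: "real \<Rightarrow> real"
    assume \<alpha>: "0 < \<alpha>" "\<alpha> < \<alpha>0" and P: "prob_space M" and Wm[measurable]: "W \<in> borel_measurable M"
      and tail: "\<forall>t\<ge>0. measure M {x\<in>space M. t < \<bar>W x\<bar>} \<le> a * exp (- b * t)"
    interpret prob_space M by (rule P)
    have \<alpha>b: "\<alpha> \<le> b/3" and \<alpha>d: "\<alpha> < 1/d" and \<alpha>K: "\<alpha> < d / (2 * Cc * K1)" using \<alpha> by (auto simp: \<alpha>0_def)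
    have pos: "0 < 1 - \<alpha> * d / 2" using \<alpha>d d by (simp add: field_simps)
    have nnK: "(\<integral>\<^sup>+x. ennreal (exp (c * \<bar>W x\<bar>)) \<partial>M) \<le> ennreal K1"
      unfolding K1_def by (rule tail_nn[OF P Wm a b c(1,2) tail])
    have inte: "integrable M (\<lambda>x. exp (c * \<bar>W x\<bar>))"
    proof (rule integrableI_bounded)
      show "(\<integral>\<^sup>+x. ennreal (norm (exp (c * \<bar>W x\<bar>))) \<partial>M) < \<infinity>"
        using nnK by (simp add: less_top[symmetric] top_unique) (metis ennreal_neq_top neq_top_trans)
    qed measurable
    have "\<alpha> \<le> c" using \<alpha>b b by (simp add: c_def)
    have nnKa: "(\<integral>\<^sup>+x. ennreal (exp (\<alpha> * \<bar>W x\<bar>)) \<partial>M) \<le> ennreal K1"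
    proof -
      have "(\<integral>\<^sup>+x. ennreal (exp (\<alpha> * \<bar>W x\<bar>)) \<partial>M) \<le> (\<integral>\<^sup>+x. ennreal (exp (c * \<bar>W x\<bar>)) \<partial>M)"
        using \<alpha>b b by (intro nn_integral_mono ennreal_leI) (simp add: mult_right_mono c_def[symmetric] \<open>\<alpha> \<le> c\<close>)
      thus ?thesis using nnK by simp
    qed
    have intW: "integrable M W"
    proof (rule Bochner_Integration.integrable_bound[OF integrable_mult_right[OF inte, of "1/c"]])
      show "AE x in M. norm (W x) \<le> norm (1/c * exp (c * \<bar>W x\<bar>))"
      proof (intro AE_I2)
        fix x
        have "c * \<bar>W x\<bar> \<le> exp (c * \<bar>W x\<bar>)" using exp_ge_add_one_self[of "c * \<bar>W x\<bar>"] by linarith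
        thus "norm (W x) \<le> norm (1/c * exp (c * \<bar>W x\<bar>))" using c by (simp add: field_simps)
      qed
    qed measurable
    have inteval: "integral\<^sup>L M (\<lambda>x. exp (c * \<bar>W x\<bar>)) \<le> K1"
    proof -
      have "ennreal (integral\<^sup>L M (\<lambda>x. exp (c * \<bar>W x\<bar>))) = (\<integral>\<^sup>+x. ennreal (exp (c * \<bar>W x\<bar>)) \<partial>M)"
        by (rule nn_integral_eq_integral[OF inte, symmetric]) simp
      with nnK have "ennreal (integral\<^sup>L M (\<lambda>x. exp (c * \<bar>W x\<bar>))) \<le> ennreal K1" by simp
      thus ?thesis using K1 by (simp add: ennreal_le_iff)
    qed
    define g where "g x = 1 + \<alpha> * W x + \<alpha>^2 * Cc * exp (c * \<bar>W x\<bar>)" for x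
    have gpt: "exp (\<alpha> * W x) \<le> g x" for x
    proof -
      have "(\<alpha> * W x)^2 * exp \<bar>\<alpha> * W x\<bar> \<le> \<alpha>^2 * Cc * exp (c * \<bar>W x\<bar>)"
      proof -
        have w2: "(W x)^2 \<le> Cc * exp (b/3 * \<bar>W x\<bar>)" unfolding Cc_def using sq_le_exp[of "b/3" "W x"] b by simp
        have ea: "exp \<bar>\<alpha> * W x\<bar> \<le> exp (b/3 * \<bar>W x\<bar>)" using \<alpha> \<alpha>b mult_right_mono[OF \<alpha>b abs_ge_zero[of "W x"]] by (simp add: abs_mult)
        have "(W x)^2 * exp \<bar>\<alpha> * W x\<bar> \<le> Cc * exp (b/3 * \<bar>W x\<bar>) * exp (b/3 * \<bar>W x\<bar>)"
          using w2 ea Cc by (intro mult_mono) auto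
        also have "\<dots> = Cc * exp (c * \<bar>W x\<bar>)" by (simp add: c_def mult.assoc flip: exp_add)
        finally have "(W x)^2 * exp \<bar>\<alpha> * W x\<bar> \<le> Cc * exp (c * \<bar>W x\<bar>)" .
        hence "\<alpha>^2 * ((W x)^2 * exp \<bar>\<alpha> * W x\<bar>) \<le> \<alpha>^2 * (Cc * exp (c * \<bar>W x\<bar>))" by (intro mult_left_mono) auto
        thus ?thesis by (simp add: power_mult_distrib algebra_simps)
      qed
      thus ?thesis using exp_quad[of "\<alpha> * W x"] unfolding g_def by linarith
    qed
    have intg: "integrable M g" unfolding g_def using intW inte by auto
    have ig: "integral\<^sup>L M g = 1 + \<alpha> * integral\<^sup>L M W + \<alpha>^2 * Cc * integral\<^sup>L M (\<lambda>x. exp (c * \<bar>W x\<bar>))"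
      unfolding g_def using intW inte by (simp add: prob_space)
    show "0 < 1 - \<alpha> * d / 2 \<and> (\<integral>\<^sup>+x. ennreal (exp (\<alpha> * \<bar>W x\<bar>)) \<partial>M) \<le> ennreal K1 \<and> integrable M W \<and>
      (integral\<^sup>L M W \<le> - d \<longrightarrow> (\<integral>\<^sup>+x. ennreal (exp (\<alpha> * W x)) \<partial>M) \<le> ennreal (1 - \<alpha> * d / 2))"
    proof (intro conjI pos nnKa intW impI)
      assume EW: "integral\<^sup>L M W \<le> - d"
      have "(\<integral>\<^sup>+x. ennreal (exp (\<alpha> * W x)) \<partial>M) \<le> (\<integral>\<^sup>+x. ennreal (g x) \<partial>M)"
        by (intro nn_integral_mono ennreal_leI gpt)
      also have "\<dots> = ennreal (integral\<^sup>L M g)"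
        by (rule nn_integral_eq_integral[OF intg]) (use gpt in \<open>auto intro: order_trans[OF exp_ge_zero]\<close>)
      also have "integral\<^sup>L M g \<le> 1 - \<alpha> * d + \<alpha>^2 * Cc * K1"
        unfolding ig using EW inteval \<alpha> Cc mult_left_mono[OF EW, of \<alpha>]
        by (intro add_mono mult_left_mono) auto
      also have "\<dots> \<le> 1 - \<alpha> * d / 2"
      proof -
        have "\<alpha> * (2 * Cc * K1) < d" using \<alpha>K Cc K1 by (simp add: field_simps)
        hence "\<alpha> * (\<alpha> * Cc * K1) \<le> \<alpha> * (d/2)" using \<alpha> by (intro mult_left_mono) (auto simp: field_simps)
        thus ?thesis by (simp add: power2_eq_square algebra_simps)
      qed
      finally show "(\<integral>\<^sup>+x. ennreal (exp (\<alpha> * W x)) \<partial>M) \<le> ennreal (1 - \<alpha> * d / 2)" by (metis ennreal_leI)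
    qed
  qed
qed



lemma cl_sets: "sets (cond_law f1 f2 y \<theta>) = sets borel"
  by (simp add: cond_law_def)

lemma cl_space: "space (cond_law f1 f2 y \<theta>) = UNIV"
  by (simp add: cond_law_def)

lemma cl_meas: "W \<in> borel_measurable borel \<Longrightarrow> W \<in> borel_measurable (cond_law f1 f2 y \<theta>)"
  using measurable_cong_sets[OF cl_sets refl] by blast

lemma cl_prob:
  assumes f1: "noise_density f1" and f2: "noise_density f2"
  shows "prob_space (cond_law f1 f2 y \<theta>)"
proof -
  from f1 obtain B where B: "\<And>x. f1 x \<le> B" unfolding noise_density_def by blast
  have c1: "continuous_on UNIV f1" and p1: "\<And>x. 0 < f1 x" using f1 unfolding noise_density_def by auto
  have c2: "continuous_on UNIV f2" and p2: "\<And>x. 0 < f2 x" and i2: "integrable lborel f2"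
    using f2 unfolding noise_density_def by auto
  have B0: "0 \<le> B" using B[of 0] p1[of 0] by linarith
  have m1[measurable]: "f1 \<in> borel_measurable borel" by (rule borel_measurable_continuous_onI[OF c1])
  have m2[measurable]: "f2 \<in> borel_measurable borel" by (rule borel_measurable_continuous_onI[OF c2])
  have i2': "integrable lborel (\<lambda>x. f2 (x - \<theta>))"
  proof -
    have "integrable lborel (\<lambda>x. f2 (- \<theta> + 1 * x))"
      using lborel_integrable_real_affine_iff[of 1 f2 "-\<theta>"] i2 by simp
    thus ?thesis by (simp add: add.commute)
  qed
  have lm[measurable]: "lik f1 f2 y \<theta> \<in> borel_measurable borel" unfolding lik_def by measurable
  have lpos: "0 < lik f1 f2 y \<theta> x" for x unfolding lik_def using p1 p2 by simp
  have il: "integrable lborel (lik f1 f2 y \<theta>)"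
  proof (rule Bochner_Integration.integrable_bound[OF integrable_mult_right[OF i2', of B]])
    show "AE x in lborel. norm (lik f1 f2 y \<theta> x) \<le> norm (B * f2 (x - \<theta>))"
    proof (intro AE_I2)
      fix x
      have "f1 (y - x) * f2 (x - \<theta>) \<le> B * f2 (x - \<theta>)" using B p2 by (intro mult_right_mono) (auto intro: less_imp_le)
      thus "norm (lik f1 f2 y \<theta> x) \<le> norm (B * f2 (x - \<theta>))" using p1 p2 B0 by (simp add: lik_def abs_mult abs_of_pos[OF p1] abs_of_pos[OF p2] abs_of_nonneg[OF B0])
    qed
  qed simp
  define N where "N = norm_const f1 f2 y \<theta>"
  have N0: "0 \<le> N" unfolding N_def norm_const_def using lpos by (intro integral_nonneg_AE AE_I2) (simp add: less_imp_le)
  have "N \<noteq> 0"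
  proof
    assume "N = 0"
    hence "AE x in lborel. lik f1 f2 y \<theta> x = 0"
      using integral_nonneg_eq_0_iff_AE[OF il] lpos unfolding N_def norm_const_def by (simp add: less_imp_le)
    hence "AE (x::real) in lborel. False"
    proof eventually_elim
      case (elim x) then show False using lpos[of x] by simp
    qed
    moreover have "(AE (x::real) in lborel. False) \<longleftrightarrow> emeasure lborel (UNIV :: real set) = 0"
      by (rule AE_iff_measurable) auto
    ultimately have "emeasure lborel (UNIV :: real set) = 0" by simp
    thus False by simp
  qed
  hence Np: "N > 0" using N0 by simp
  show ?thesis
  proof (rule prob_spaceI)
    have "emeasure (cond_law f1 f2 y \<theta>) (space (cond_law f1 f2 y \<theta>))
        = (\<integral>\<^sup>+x. ennreal (lik f1 f2 y \<theta> x / N) \<partial>lborel)"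
      unfolding cond_law_def N_def by (subst emeasure_density) auto
    also have "\<dots> = ennreal (integral\<^sup>L lborel (\<lambda>x. lik f1 f2 y \<theta> x / N))"
      by (rule nn_integral_eq_integral) (use il Np lpos in \<open>auto intro!: AE_I2 divide_nonneg_pos less_imp_le\<close>)
    also have "integral\<^sup>L lborel (\<lambda>x. lik f1 f2 y \<theta> x / N) = 1"
      using Np by (simp add: N_def norm_const_def)
    finally show "emeasure (cond_law f1 f2 y \<theta>) (space (cond_law f1 f2 y \<theta>)) = 1" by simp
  qed
qed



lemma final:
  fixes M :: "real measure" and W v :: "real \<Rightarrow> real"
  assumes P: "prob_space M" and Wm: "W \<in> borel_measurable M" and vm: "v \<in> borel_measurable M"
    and s: "\<bar>s\<bar> = 1" and \<alpha>: "\<alpha> \<ge> 0" and Wv: "\<And>x. W x = s * v x - \<bar>\<theta>\<bar>"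
    and I1: "(\<integral>\<^sup>+x. ennreal (exp (\<alpha> * W x)) \<partial>M) \<le> ennreal A" and A: "A \<ge> 0"
    and I2: "(\<integral>\<^sup>+x. ennreal (exp (\<alpha> * \<bar>W x\<bar>)) \<partial>M) \<le> ennreal K" and K: "K \<ge> 0"
  shows "(\<integral>\<^sup>+x. ennreal (exp (\<alpha> * \<bar>v x\<bar>)) \<partial>M) \<le> ennreal (exp (\<alpha> * \<bar>\<theta>\<bar>) * A + K)"
proof -
  have "(\<integral>\<^sup>+x. ennreal (exp (\<alpha> * \<bar>v x\<bar>)) \<partial>M)
      \<le> (\<integral>\<^sup>+x. ennreal (exp (\<alpha> * \<bar>\<theta>\<bar>)) * ennreal (exp (\<alpha> * W x)) + ennreal (exp (\<alpha> * \<bar>W x\<bar>)) \<partial>M)"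
  proof (intro nn_integral_mono)
    fix x
    have "exp (\<alpha> * \<bar>v x\<bar>) \<le> exp (\<alpha> * \<bar>\<theta>\<bar>) * exp (\<alpha> * W x) + exp (\<alpha> * \<bar>W x\<bar>)"
      using pw[OF s \<alpha>, of "v x" \<theta>] by (simp add: Wv)
    hence "ennreal (exp (\<alpha> * \<bar>v x\<bar>)) \<le> ennreal (exp (\<alpha> * \<bar>\<theta>\<bar>) * exp (\<alpha> * W x) + exp (\<alpha> * \<bar>W x\<bar>))"
      by (rule ennreal_leI)
    thus "ennreal (exp (\<alpha> * \<bar>v x\<bar>)) \<le> ennreal (exp (\<alpha> * \<bar>\<theta>\<bar>)) * ennreal (exp (\<alpha> * W x)) + ennreal (exp (\<alpha> * \<bar>W x\<bar>))"
      by (simp add: ennreal_mult ennreal_plus)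
  qed
  also have "\<dots> = ennreal (exp (\<alpha> * \<bar>\<theta>\<bar>)) * (\<integral>\<^sup>+x. ennreal (exp (\<alpha> * W x)) \<partial>M) + (\<integral>\<^sup>+x. ennreal (exp (\<alpha> * \<bar>W x\<bar>)) \<partial>M)"
    using Wm by (simp add: nn_integral_add nn_integral_cmult)
  also have "\<dots> \<le> ennreal (exp (\<alpha> * \<bar>\<theta>\<bar>)) * ennreal A + ennreal K"
    by (intro add_mono mult_left_mono I1 I2) auto
  also have "\<dots> = ennreal (exp (\<alpha> * \<bar>\<theta>\<bar>) * A + K)"
    using A K by (simp add: ennreal_mult ennreal_plus)
  finally show ?thesis .
qed



lemma tail2:
  fixes M :: "real measure"
  assumes P: "prob_space M" and idm[measurable]: "(\<lambda>x. x) \<in> borel_measurable M" and a: "a > 0" and b: "b > 0"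
    and tl: "\<forall>t\<ge>0. measure M {x\<in>space M. t < \<bar>x\<bar>} \<le> a * exp (- b * t)"
  shows "\<forall>t\<ge>0. measure M {x\<in>space M. t < \<bar>y - x\<bar>} \<le> (a+1) * exp (b * \<bar>y\<bar>) * exp (- b * t)"
proof (intro allI impI)
  interpret prob_space M by (rule P)
  fix t :: real assume t: "t \<ge> 0"
  show "measure M {x\<in>space M. t < \<bar>y - x\<bar>} \<le> (a+1) * exp (b * \<bar>y\<bar>) * exp (- b * t)"
  proof (cases "t \<ge> \<bar>y\<bar>")
    case True
    have "measure M {x\<in>space M. t < \<bar>y - x\<bar>} \<le> measure M {x\<in>space M. t - \<bar>y\<bar> < \<bar>x\<bar>}"
      by (intro finite_measure_mono) (auto, measurable)
    also have "\<dots> \<le> a * exp (- b * (t - \<bar>y\<bar>))" using tl True by simp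
    also have "\<dots> = a * exp (b * \<bar>y\<bar>) * exp (- b * t)" by (simp add: algebra_simps flip: exp_add)
    also have "\<dots> \<le> (a+1) * exp (b * \<bar>y\<bar>) * exp (- b * t)" by (intro mult_right_mono) auto
    finally show ?thesis .
  next
    case False
    have "measure M {x\<in>space M. t < \<bar>y - x\<bar>} \<le> 1" by (rule prob_le_1)
    also have "1 \<le> (a+1) * exp (b * \<bar>y\<bar>) * exp (- b * t)"
    proof -
      have "1 \<le> exp (b * \<bar>y\<bar> + - b * t)" using False b by (simp add: algebra_simps mult_left_mono)
      also have "\<dots> \<le> (a+1) * exp (b * \<bar>y\<bar> + - b * t)" using a by simp
      finally show ?thesis by (simp add: mult.assoc flip: exp_add)
    qed
    finally show ?thesis .
  qed
qed



theorem mainTheorem5: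
  fixes f1 f2 :: "real \<Rightarrow> real" and y d k :: real
  assumes f1: "noise_density f1" and f2: "noise_density f2"
  shows "(DUR f1 f2 y d k \<and> GTIP_Xt f1 f2 y \<longrightarrow>
           (\<exists>\<alpha>0>0. \<forall>\<alpha>. 0 < \<alpha> \<and> \<alpha> < \<alpha>0 \<longrightarrow> (\<exists>K>0. \<forall>\<theta>. \<bar>\<theta>\<bar> > k \<longrightarrow>
              (\<integral>\<^sup>+x. ennreal (exp (\<alpha> * \<bar>x\<bar>)) \<partial>cond_law f1 f2 y \<theta>)
                \<le> ennreal (exp (\<alpha> * \<bar>\<theta>\<bar>) * (1 - \<alpha> * d / 2) + K))))
       \<and> (PUR f1 f2 y d k \<and> GTIP_X f1 f2 y \<longrightarrow>
           (\<exists>\<alpha>0>0. \<forall>\<alpha>. 0 < \<alpha> \<and> \<alpha> < \<alpha>0 \<longrightarrow> (\<exists>K>0. \<forall>\<theta>. \<bar>\<theta>\<bar> > k \<longrightarrow>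
              (\<integral>\<^sup>+x. ennreal (exp (\<alpha> * \<bar>y - (x - \<theta>)\<bar>)) \<partial>cond_law f1 f2 y \<theta>)
                \<le> ennreal (exp (\<alpha> * \<bar>\<theta>\<bar>) * (1 - \<alpha> * d / 2) + K))))"
proof (intro conjI impI)
  assume h: "DUR f1 f2 y d k \<and> GTIP_Xt f1 f2 y"
  have d: "d > 0" and k: "k > 0" and dur: "\<And>\<theta>. \<bar>\<theta>\<bar> > k \<Longrightarrow> \<bar>\<integral>x. x \<partial>cond_law f1 f2 y \<theta>\<bar> \<le> \<bar>\<theta>\<bar> - d"
    using h unfolding DUR_def by auto
  obtain a b where a: "a > 0" and b: "b > 0"
    and gt: "\<And>\<theta> t. t \<ge> 0 \<Longrightarrow> measure (cond_law f1 f2 y \<theta>) {x. \<bar>x - \<theta>\<bar> > t} \<le> a * exp (- b * t)"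
    using h unfolding GTIP_Xt_def by blast
  obtain \<alpha>0 K where \<alpha>0: "\<alpha>0 > 0" and K: "K > 0" and H: "\<And>\<alpha> M (W :: real \<Rightarrow> real). 0 < \<alpha> \<Longrightarrow> \<alpha> < \<alpha>0 \<Longrightarrow> prob_space M \<Longrightarrow> W \<in> borel_measurable M \<Longrightarrow>
      (\<forall>t\<ge>0. measure M {x\<in>space M. t < \<bar>W x\<bar>} \<le> a * exp (- b * t)) \<Longrightarrow>
      0 < 1 - \<alpha> * d / 2 \<and> (\<integral>\<^sup>+x. ennreal (exp (\<alpha> * \<bar>W x\<bar>)) \<partial>M) \<le> ennreal K \<and> integrable M W \<and>
      (integral\<^sup>L M W \<le> - d \<longrightarrow> (\<integral>\<^sup>+x. ennreal (exp (\<alpha> * W x)) \<partial>M) \<le> ennreal (1 - \<alpha> * d / 2))"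
    using L[OF a b d] by blast
  show "\<exists>\<alpha>0>0. \<forall>\<alpha>. 0 < \<alpha> \<and> \<alpha> < \<alpha>0 \<longrightarrow> (\<exists>K>0. \<forall>\<theta>. \<bar>\<theta>\<bar> > k \<longrightarrow>
              (\<integral>\<^sup>+x. ennreal (exp (\<alpha> * \<bar>x\<bar>)) \<partial>cond_law f1 f2 y \<theta>)
                \<le> ennreal (exp (\<alpha> * \<bar>\<theta>\<bar>) * (1 - \<alpha> * d / 2) + K))"
  proof (rule exI[of _ \<alpha>0], intro conjI allI impI \<alpha>0, rule exI[of _ K], intro conjI allI impI K)
    fix \<alpha> \<theta> :: real assume \<alpha>: "0 < \<alpha> \<and> \<alpha> < \<alpha>0" and \<theta>: "\<bar>\<theta>\<bar> > k"
    define M where "M = cond_law f1 f2 y \<theta>"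
    define s where "s = sgn \<theta>"
    define W where "W x = s * x - \<bar>\<theta>\<bar>" for x
    have P: "prob_space M" unfolding M_def by (rule cl_prob[OF f1 f2])
    have s: "\<bar>s\<bar> = 1" "s * s = 1" "s * \<theta> = \<bar>\<theta>\<bar>" using \<theta> k by (auto simp: s_def sgn_if)
    have Wabs: "\<bar>W x\<bar> = \<bar>x - \<theta>\<bar>" for x
    proof -
      have "W x = s * (x - \<theta>)" using s by (simp add: W_def algebra_simps)
      thus ?thesis using s by (simp add: abs_mult)
    qed
    have Wm: "W \<in> borel_measurable M" unfolding M_def W_def by (rule cl_meas) measurable
    have idm: "(\<lambda>x. x) \<in> borel_measurable M" unfolding M_def by (rule cl_meas) measurable
    have tail: "\<forall>t\<ge>0. measure M {x\<in>space M. t < \<bar>W x\<bar>} \<le> a * exp (- b * t)"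
      using gt by (simp add: M_def cl_space Wabs)
    have HH: "0 < 1 - \<alpha> * d / 2 \<and> (\<integral>\<^sup>+x. ennreal (exp (\<alpha> * \<bar>W x\<bar>)) \<partial>M) \<le> ennreal K \<and> integrable M W \<and>
      (integral\<^sup>L M W \<le> - d \<longrightarrow> (\<integral>\<^sup>+x. ennreal (exp (\<alpha> * W x)) \<partial>M) \<le> ennreal (1 - \<alpha> * d / 2))"
      using H[of \<alpha> M W] \<alpha> P Wm tail by blast
    interpret prob_space M by (rule P)
    have intW: "integrable M W" using HH by blast
    have intx: "integrable M (\<lambda>x. x)"
    proof -
      have "integrable M (\<lambda>x. s * (W x + \<bar>\<theta>\<bar>))" using intW by auto
      moreover have "(\<lambda>x. s * (W x + \<bar>\<theta>\<bar>)) = (\<lambda>x. x)" using s by (auto simp: W_def algebra_simps)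
      ultimately show ?thesis by simp
    qed
    have EW: "integral\<^sup>L M W = s * (\<integral>x. x \<partial>M) - \<bar>\<theta>\<bar>"
      unfolding W_def using intx by (simp add: prob_space)
    have "s * (\<integral>x. x \<partial>M) \<le> \<bar>\<integral>x. x \<partial>M\<bar>"
    proof -
      have "s * (\<integral>x. x \<partial>M) \<le> \<bar>s * (\<integral>x. x \<partial>M)\<bar>" by (rule abs_ge_self)
      also have "\<dots> = \<bar>\<integral>x. x \<partial>M\<bar>" using s(1) by (simp add: abs_mult)
      finally show ?thesis .
    qed
    hence "integral\<^sup>L M W \<le> - d" using dur[OF \<theta>] EW unfolding M_def by linarith
    hence I1: "(\<integral>\<^sup>+x. ennreal (exp (\<alpha> * W x)) \<partial>M) \<le> ennreal (1 - \<alpha> * d / 2)" using HH by blast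
    have "(\<integral>\<^sup>+x. ennreal (exp (\<alpha> * \<bar>x\<bar>)) \<partial>M) \<le> ennreal (exp (\<alpha> * \<bar>\<theta>\<bar>) * (1 - \<alpha> * d / 2) + K)"
      using final[OF P Wm idm s(1), of \<alpha> \<theta> "1 - \<alpha> * d / 2" K] I1 HH K \<alpha> by (simp add: W_def less_imp_le)
    thus "(\<integral>\<^sup>+x. ennreal (exp (\<alpha> * \<bar>x\<bar>)) \<partial>cond_law f1 f2 y \<theta>) \<le> ennreal (exp (\<alpha> * \<bar>\<theta>\<bar>) * (1 - \<alpha> * d / 2) + K)"
      by (simp add: M_def)
  qed
next
  assume h: "PUR f1 f2 y d k \<and> GTIP_X f1 f2 y"
  have d: "d > 0" and k: "k > 0" and pur: "\<And>\<theta>. \<bar>\<theta>\<bar> > k \<Longrightarrow> sgn \<theta> * (\<integral>x. (x - y) \<partial>cond_law f1 f2 y \<theta>) \<ge> d"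
    using h unfolding PUR_def by auto
  obtain a b where a: "a > 0" and b: "b > 0"
    and gt: "\<And>\<theta> t. t \<ge> 0 \<Longrightarrow> measure (cond_law f1 f2 y \<theta>) {x. \<bar>x\<bar> > t} \<le> a * exp (- b * t)"
    using h unfolding GTIP_X_def by blast
  define a' where "a' = (a+1) * exp (b * \<bar>y\<bar>)"
  have a': "a' > 0" using a by (simp add: a'_def)
  obtain \<alpha>0 K where \<alpha>0: "\<alpha>0 > 0" and K: "K > 0" and H: "\<And>\<alpha> M (W :: real \<Rightarrow> real). 0 < \<alpha> \<Longrightarrow> \<alpha> < \<alpha>0 \<Longrightarrow> prob_space M \<Longrightarrow> W \<in> borel_measurable M \<Longrightarrow>
      (\<forall>t\<ge>0. measure M {x\<in>space M. t < \<bar>W x\<bar>} \<le> a' * exp (- b * t)) \<Longrightarrow>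
      0 < 1 - \<alpha> * d / 2 \<and> (\<integral>\<^sup>+x. ennreal (exp (\<alpha> * \<bar>W x\<bar>)) \<partial>M) \<le> ennreal K \<and> integrable M W \<and>
      (integral\<^sup>L M W \<le> - d \<longrightarrow> (\<integral>\<^sup>+x. ennreal (exp (\<alpha> * W x)) \<partial>M) \<le> ennreal (1 - \<alpha> * d / 2))"
    using L[OF a' b d] by blast
  show "\<exists>\<alpha>0>0. \<forall>\<alpha>. 0 < \<alpha> \<and> \<alpha> < \<alpha>0 \<longrightarrow> (\<exists>K>0. \<forall>\<theta>. \<bar>\<theta>\<bar> > k \<longrightarrow>
              (\<integral>\<^sup>+x. ennreal (exp (\<alpha> * \<bar>y - (x - \<theta>)\<bar>)) \<partial>cond_law f1 f2 y \<theta>)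
                \<le> ennreal (exp (\<alpha> * \<bar>\<theta>\<bar>) * (1 - \<alpha> * d / 2) + K))"
  proof (rule exI[of _ \<alpha>0], intro conjI allI impI \<alpha>0, rule exI[of _ K], intro conjI allI impI K)
    fix \<alpha> \<theta> :: real assume \<alpha>: "0 < \<alpha> \<and> \<alpha> < \<alpha>0" and \<theta>: "\<bar>\<theta>\<bar> > k"
    define M where "M = cond_law f1 f2 y \<theta>"
    define s where "s = sgn \<theta>"
    define W where "W x = s * (y - (x - \<theta>)) - \<bar>\<theta>\<bar>" for x
    have P: "prob_space M" unfolding M_def by (rule cl_prob[OF f1 f2])
    have s: "\<bar>s\<bar> = 1" "s * s = 1" "s * \<theta> = \<bar>\<theta>\<bar>" using \<theta> k by (auto simp: s_def sgn_if)
    have Weq: "W x = s * (y - x)" for x using s by (simp add: W_def algebra_simps)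
    have Wabs: "\<bar>W x\<bar> = \<bar>y - x\<bar>" for x using s by (simp add: Weq abs_mult)
    have Wm: "W \<in> borel_measurable M" unfolding M_def W_def by (rule cl_meas) measurable
    have idm: "(\<lambda>x. x) \<in> borel_measurable M" unfolding M_def by (rule cl_meas) measurable
    have vm: "(\<lambda>x. y - (x - \<theta>)) \<in> borel_measurable M" unfolding M_def by (rule cl_meas) measurable
    have tl: "\<forall>t\<ge>0. measure M {x\<in>space M. t < \<bar>x\<bar>} \<le> a * exp (- b * t)"
      using gt by (simp add: M_def cl_space)
    have tail: "\<forall>t\<ge>0. measure M {x\<in>space M. t < \<bar>W x\<bar>} \<le> a' * exp (- b * t)"
      using tail2[OF P idm a b tl, of y] by (simp add: Wabs a'_def)
    have HH: "0 < 1 - \<alpha> * d / 2 \<and> (\<integral>\<^sup>+x. ennreal (exp (\<alpha> * \<bar>W x\<bar>)) \<partial>M) \<le> ennreal K \<and> integrable M W \<and>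
      (integral\<^sup>L M W \<le> - d \<longrightarrow> (\<integral>\<^sup>+x. ennreal (exp (\<alpha> * W x)) \<partial>M) \<le> ennreal (1 - \<alpha> * d / 2))"
      using H[of \<alpha> M W] \<alpha> P Wm tail by blast
    interpret prob_space M by (rule P)
    have intW: "integrable M W" using HH by blast
    have intx: "integrable M (\<lambda>x. x)"
    proof -
      have "integrable M (\<lambda>x. y - s * W x)" using intW by auto
      moreover have "(\<lambda>x. y - s * W x) = (\<lambda>x. x)" using s by (auto simp: Weq algebra_simps)
      ultimately show ?thesis by simp
    qed
    have EW: "integral\<^sup>L M W = - (s * (\<integral>x. (x - y) \<partial>M))"
      unfolding Weq using intx by (simp add: prob_space algebra_simps)
    hence "integral\<^sup>L M W \<le> - d" using pur[OF \<theta>] unfolding M_def s_def by linarith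
    hence I1: "(\<integral>\<^sup>+x. ennreal (exp (\<alpha> * W x)) \<partial>M) \<le> ennreal (1 - \<alpha> * d / 2)" using HH by blast
    have "(\<integral>\<^sup>+x. ennreal (exp (\<alpha> * \<bar>y - (x - \<theta>)\<bar>)) \<partial>M) \<le> ennreal (exp (\<alpha> * \<bar>\<theta>\<bar>) * (1 - \<alpha> * d / 2) + K)"
      using final[OF P Wm vm s(1), of \<alpha> \<theta> "1 - \<alpha> * d / 2" K] I1 HH K \<alpha> by (simp add: W_def less_imp_le)
    thus "(\<integral>\<^sup>+x. ennreal (exp (\<alpha> * \<bar>y - (x - \<theta>)\<bar>)) \<partial>cond_law f1 f2 y \<theta>) \<le> ennreal (exp (\<alpha> * \<bar>\<theta>\<bar>) * (1 - \<alpha> * d / 2) + K)"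
      by (simp add: M_def)
  qed
qed


end
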